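(* Assume $n\ge3$. Let $\phi=\sum_{a\in\{1,\dots,n\}^\ell}c_a\,x^{a_1}\cdots x^{a_\ell}$ ($c_a\in\mathbb{C}$) be a homogeneous polynomial of degree $\ell$ satisfying $\sum_{b,c}\eta^{bc}\partial_b\partial_c\phi=0$, and let $\tilde\phi=\sum_a c_a\,\tilde x^{a_1}\tilde x^{a_2}\cdots\tilde x^{a_\ell}$ (composition of operators). Then $\tilde\phi(1)=\phi$.
   Context: $(\eta_{ab})$ is a non-degenerate symmetric complex $n\times n$ matrix with inverse $(\eta^{ab})$; $\partial_a=\partial/\partial x^a$, $\partial^a=\sum_b\eta^{ab}\partial_b$, $x_bx^b=\sum_{b,c}\eta_{bc}x^bx^c$. $H=-\frac12\sum_a(x^a\partial_a+\partial_ax^a)$ acts on homogeneous polynomials of degree $d$ by the scalar $-d-\frac n2$. The operator $\tilde x^a$ on $\mathbb{C}[x^1,\dots,x^n]$ is $\tilde x^a=x^a+\frac1{2H+4}\,x_bx^b\,\partial^a$ (the element $P(x^a+I)$ of the reduction algebra): explicitly, for $\psi$ homogeneous of degree $d\ge1$, $\tilde x^a\psi=x^a\psi+\frac{1}{2-2d-n}\,x_bx^b\,\partial^a\psi$, and $\tilde x^a\psi=x^a\psi$ for $\psi$ constant. *)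

theory Defs
  imports Complex_Main "HOL-Library.Cardinality"
begin

text \<open>Polynomials in \<open>\<complex>[x^a : a \<in> 'n]\<close> (variables indexed by a finite type \<open>'n\<close>,
  \<open>n = CARD('n)\<close>) are represented by their coefficient functions on exponent vectors
  \<open>m :: 'n \<Rightarrow> nat\<close>.\<close>

type_synonym 'n cpoly = "('n \<Rightarrow> nat) \<Rightarrow> complex"

definition mdeg :: "('n::finite \<Rightarrow> nat) \<Rightarrow> nat" where
  "mdeg m = (\<Sum>i\<in>UNIV. m i)"

definition pone :: "'n cpoly" where
  "pone = (\<lambda>m. if m = (\<lambda>_. 0) then 1 else 0)"

definition mulx :: "'n \<Rightarrow> 'n cpoly \<Rightarrow> 'n cpoly" where
  "mulx a p = (\<lambda>m. if 0 < m a then p (m(a := m a - 1)) else 0)"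

definition pd :: "'n \<Rightarrow> 'n cpoly \<Rightarrow> 'n cpoly" where
  "pd a p = (\<lambda>m. of_nat (m a + 1) * p (m(a := m a + 1)))"

text \<open>\<open>\<partial>^a = \<Sum>_b \<eta>^{ab} \<partial>_b\<close>, where \<open>etaI\<close> is the inverse matrix \<open>(\<eta>^{ab})\<close>\<close>
definition pdup :: "('n::finite \<Rightarrow> 'n \<Rightarrow> complex) \<Rightarrow> 'n \<Rightarrow> 'n cpoly \<Rightarrow> 'n cpoly" where
  "pdup etaI a p = (\<lambda>m. \<Sum>b\<in>UNIV. etaI a b * pd b p m)"

definition mulQ :: "('n::finite \<Rightarrow> 'n \<Rightarrow> complex) \<Rightarrow> 'n cpoly \<Rightarrow> 'n cpoly" where
  "mulQ eta p = (\<lambda>m. \<Sum>b\<in>UNIV. \<Sum>c\<in>UNIV. eta b c * mulx b (mulx c p) m)"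

definition lap :: "('n::finite \<Rightarrow> 'n \<Rightarrow> complex) \<Rightarrow> 'n cpoly \<Rightarrow> 'n cpoly" where
  "lap etaI p = (\<lambda>m. \<Sum>b\<in>UNIV. \<Sum>c\<in>UNIV. etaI b c * pd b (pd c p) m)"

text \<open>\<open>(2H+4)^{-1}\<close>: \<open>H\<close> acts on degree \<open>d\<close> homogeneous polynomials by \<open>-d - n/2\<close>, so
  \<open>2H+4\<close> acts by \<open>4 - 2d - n\<close>.  (Only applied to polynomials with no components of
  degree \<open>< 2\<close>, where this is nonzero for \<open>n \<ge> 3\<close>.)\<close>
definition inv2H4 :: "'n::finite cpoly \<Rightarrow> 'n cpoly" where
  "inv2H4 p = (\<lambda>m. p m / (4 - 2 * of_nat (mdeg m) - of_nat CARD('n)))"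

definition xtilde :: "('n::finite \<Rightarrow> 'n \<Rightarrow> complex) \<Rightarrow> ('n \<Rightarrow> 'n \<Rightarrow> complex)
    \<Rightarrow> 'n \<Rightarrow> 'n cpoly \<Rightarrow> 'n cpoly" where
  "xtilde eta etaI a p = (\<lambda>m. mulx a p m + inv2H4 (mulQ eta (pdup etaI a p)) m)"

definition polyOf :: "nat \<Rightarrow> ('n list \<Rightarrow> complex) \<Rightarrow> 'n cpoly" where
  "polyOf l c = (\<lambda>m. \<Sum>as\<in>{as. length as = l}. c as * foldr mulx as pone m)"

definition tildeOf :: "('n::finite \<Rightarrow> 'n \<Rightarrow> complex) \<Rightarrow> ('n \<Rightarrow> 'n \<Rightarrow> complex)
    \<Rightarrow> nat \<Rightarrow> ('n list \<Rightarrow> complex) \<Rightarrow> 'n cpoly" where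
  "tildeOf eta etaI l c = (\<lambda>m. \<Sum>as\<in>{as. length as = l}. c as * foldr (xtilde eta etaI) as pone m)"

end

theory Submission
  imports Defs begin

definition homz :: "int \<Rightarrow> ('n::finite) cpoly \<Rightarrow> bool" where
  "homz e p \<longleftrightarrow> (\<forall>m. p m \<noteq> 0 \<longrightarrow> int (mdeg m) = e)"

definition lin :: "('n cpoly \<Rightarrow> 'n cpoly) \<Rightarrow> bool" where
  "lin L \<longleftrightarrow> (\<forall>p q. L (\<lambda>m. p m + q m) = (\<lambda>m. L p m + L q m)) \<and> (\<forall>k p. L (\<lambda>m. k * p m) = (\<lambda>m. k * L p m))"

lemma lin_add: "lin L \<Longrightarrow> L (\<lambda>m. p m + q m) = (\<lambda>m. L p m + L q m)"
  unfolding lin_def by blast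
lemma lin_scale: "lin L \<Longrightarrow> L (\<lambda>m. k * p m) = (\<lambda>m. k * L p m)"
  unfolding lin_def by blast
lemma lin_zero: "lin L \<Longrightarrow> L (\<lambda>_. 0) = (\<lambda>_. 0)"
  using lin_scale[of L 0 "\<lambda>_. 0"] by simp
lemma lin_sum: assumes "lin L" "finite I"
  shows "L (\<lambda>m. \<Sum>i\<in>I. f i m) = (\<lambda>m. \<Sum>i\<in>I. L (f i) m)"
  using assms(2)
proof (induction I rule: finite_induct)
  case empty then show ?case using lin_zero[OF assms(1)] by simp
next
  case (insert x F)
  then show ?case using lin_add[OF assms(1), of "f x" "\<lambda>m. \<Sum>i\<in>F. f i m"] by simp
qed
lemma lin_diff: assumes "lin L" shows "L (\<lambda>m. p m - q m) = (\<lambda>m. L p m - L q m)"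
proof -
  have "(\<lambda>m. p m - q m) = (\<lambda>m. p m + (\<lambda>m. (-1) * q m) m)" by simp
  then have "L (\<lambda>m. p m - q m) = (\<lambda>m. L p m + L (\<lambda>m. (-1) * q m) m)"
    using lin_add[OF assms] by metis
  also have "L (\<lambda>m. (-1) * q m) = (\<lambda>m. (-1) * L q m)" by (rule lin_scale[OF assms])
  finally show ?thesis by simp
qed
lemma lin_funpow: "lin L \<Longrightarrow> lin (L ^^ k)"
  by (induction k) (auto simp: lin_def)

lemma lin_mulx: "lin (mulx a)"
  unfolding lin_def mulx_def by (auto simp: fun_eq_iff)
lemma lin_pd: "lin (pd a)"
  unfolding lin_def pd_def by (auto simp: fun_eq_iff algebra_simps)
lemma lin_mulQ: "lin (mulQ eta)"
  unfolding lin_def mulQ_def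
  by (auto simp: fun_eq_iff lin_add[OF lin_mulx] lin_scale[OF lin_mulx] algebra_simps sum.distrib sum_distrib_left)
lemma lin_lap: "lin (lap etaI)"
  unfolding lin_def lap_def
  by (auto simp: fun_eq_iff lin_add[OF lin_pd] lin_scale[OF lin_pd] algebra_simps sum.distrib sum_distrib_left)
lemma lin_pdup: "lin (pdup etaI a)"
  unfolding lin_def pdup_def
  by (auto simp: fun_eq_iff lin_add[OF lin_pd] lin_scale[OF lin_pd] algebra_simps sum.distrib sum_distrib_left)

lemma mdeg_upd: "mdeg (m(a := k)) + m a = mdeg m + k"
proof -
  have "mdeg (m(a := k)) = k + (\<Sum>i\<in>UNIV-{a}. m i)"
    unfolding mdeg_def by (simp add: sum.remove[of UNIV a])
  moreover have "mdeg m = m a + (\<Sum>i\<in>UNIV-{a}. m i)"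
    unfolding mdeg_def by (simp add: sum.remove[of UNIV a])
  ultimately show ?thesis by simp
qed

lemma pd_mulx: "pd a (mulx b p) = (\<lambda>m. mulx b (pd a p) m + (if a = b then p m else 0))"
  unfolding pd_def mulx_def
  by (cases "a = b") (auto simp: fun_eq_iff fun_upd_twist algebra_simps of_nat_diff)

lemma mulx_comm: "mulx a (mulx b p) = mulx b (mulx a p)"
  unfolding mulx_def
  by (cases "a = b") (auto simp: fun_eq_iff fun_upd_twist)

lemma pd_comm: "pd a (pd b p) = pd b (pd a p)"
  unfolding pd_def
  by (cases "a = b") (auto simp: fun_eq_iff fun_upd_twist)

lemma mulx_pd_same: "mulx b (pd b p) m = of_nat (m b) * p m"
  unfolding mulx_def pd_def by auto

lemma euler: "(\<Sum>b\<in>UNIV. mulx b (pd b p) m) = of_nat (mdeg m) * p m"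
  by (simp add: mulx_pd_same mdeg_def sum_distrib_right)

lemma euler_homz: "homz e p \<Longrightarrow> (\<Sum>b\<in>UNIV. mulx b (pd b p) m) = of_int e * p m"
proof (cases "p m = 0")
  case False
  assume "homz e p"
  then have "int (mdeg m) = e" using False unfolding homz_def by blast
  then have "complex_of_nat (mdeg m) = of_int e" by (metis of_int_of_nat_eq)
  then show ?thesis unfolding euler by simp
qed (simp add: euler)


lemma homz_zero: "homz e (\<lambda>_. 0)" unfolding homz_def by simp
lemma homz_add: "homz e p \<Longrightarrow> homz e q \<Longrightarrow> homz e (\<lambda>m. p m + q m)"
  unfolding homz_def by (metis add.right_neutral add_0)
lemma homz_scale: "homz e p \<Longrightarrow> homz e (\<lambda>m. k * p m)"
  unfolding homz_def by simp
lemma homz_sum: "(\<And>i. i \<in> I \<Longrightarrow> homz e (f i)) \<Longrightarrow> homz e (\<lambda>m. \<Sum>i\<in>I. f i m)"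
  unfolding homz_def by (metis (mono_tags, lifting) sum.neutral)
lemma homz_neg: "homz e p \<Longrightarrow> e < 0 \<Longrightarrow> p = (\<lambda>_. 0)"
  unfolding homz_def by fastforce
lemma homz_mulx: assumes "homz e p" shows "homz (e+1) (mulx a p)"
  unfolding homz_def
proof (intro allI impI)
  fix m assume h: "mulx a p m \<noteq> 0"
  then have "0 < m a" "p (m(a := m a - 1)) \<noteq> 0" unfolding mulx_def by (auto split: if_splits)
  then have "int (mdeg (m(a := m a - 1))) = e" using assms unfolding homz_def by blast
  moreover have "mdeg (m(a := m a - 1)) + m a = mdeg m + (m a - 1)" by (rule mdeg_upd)
  ultimately show "int (mdeg m) = e + 1" using \<open>0 < m a\<close> by linarith
qed
lemma homz_pd: assumes "homz e p" shows "homz (e-1) (pd a p)"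
  unfolding homz_def
proof (intro allI impI)
  fix m assume h: "pd a p m \<noteq> 0"
  then have "p (m(a := m a + 1)) \<noteq> 0" unfolding pd_def by auto
  then have "int (mdeg (m(a := m a + 1))) = e" using assms unfolding homz_def by blast
  moreover have "mdeg (m(a := m a + 1)) + m a = mdeg m + (m a + 1)" by (rule mdeg_upd)
  ultimately show "int (mdeg m) = e - 1" by linarith
qed
lemma homz_mulQ: assumes "homz e p" shows "homz (e+2) (mulQ eta p)"
proof -
  have "homz (e+1+1) (mulx b (mulx c p))" for b c using homz_mulx[OF homz_mulx[OF assms]] .
  then show ?thesis unfolding mulQ_def
    by (auto intro!: homz_sum homz_scale simp: algebra_simps)
qed
lemma homz_lap: assumes "homz e p" shows "homz (e-2) (lap etaI p)"
proof -
  have "homz (e-1-1) (pd b (pd c p))" for b c using homz_pd[OF homz_pd[OF assms]] .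
  then show ?thesis unfolding lap_def
    by (auto intro!: homz_sum homz_scale simp: algebra_simps)
qed
lemma homz_pdup: assumes "homz e p" shows "homz (e-1) (pdup etaI a p)"
  unfolding pdup_def using homz_pd[OF assms] by (auto intro!: homz_sum homz_scale)
lemma homz_pone: "homz 0 pone"
  unfolding homz_def pone_def mdeg_def by auto
lemma homz_monom: "homz (int (length as)) (foldr mulx as pone)"
  by (induction as) (auto simp: homz_pone add.commute dest: homz_mulx)


lemma pd_mulx2: "pd a (mulx b (mulx c p)) m = mulx b (mulx c (pd a p)) m
   + (if a = c then mulx b p m else 0) + (if a = b then mulx c p m else 0)"
  by (cases "a = c") (simp_all add: pd_mulx lin_add[OF lin_mulx])

lemma mulx_mulQ: "mulx a (mulQ eta p) = mulQ eta (mulx a p)"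
  unfolding mulQ_def
  by (simp add: lin_sum[OF lin_mulx] lin_scale[OF lin_mulx] mulx_comm[of a])


lemma sum_if_outer: "(\<Sum>b\<in>(UNIV::'a::finite set). \<Sum>c\<in>C. if b = a then g c else 0) = (\<Sum>c\<in>C. g c)"
proof -
  have "(\<lambda>b. \<Sum>c\<in>C. if b = a then g c else (0::'b::comm_monoid_add)) = (\<lambda>b. if b = a then \<Sum>c\<in>C. g c else 0)"
    by auto
  then show ?thesis by (simp only:) simp
qed

lemma delta_sum: "(\<Sum>e\<in>(UNIV::'a::finite set). (if c = e then 1 else 0) * (f e :: complex)) = f c"
proof -
  have "(\<lambda>e. (if c = e then 1 else 0) * f e) = (\<lambda>e. if c = e then f c else 0)" by auto
  then show ?thesis by (simp only:) simp
qed

locale metric =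
  fixes eta etaI :: "'n::finite \<Rightarrow> 'n \<Rightarrow> complex"
  assumes sym: "\<And>a b. eta a b = eta b a"
    and inv1: "\<And>a c. (\<Sum>b\<in>UNIV. eta a b * etaI b c) = (if a = c then 1 else 0)"
    and inv2: "\<And>a c. (\<Sum>b\<in>UNIV. etaI a b * eta b c) = (if a = c then 1 else 0)"
begin

lemma contr1: "(\<Sum>b\<in>UNIV. etaI b c * eta b e) = (if c = e then 1 else 0)"
  using inv1[of e c] by (simp add: sym mult.commute)

lemma etaI_sym: "etaI a c = etaI c a"
proof -
  have "etaI a c = (\<Sum>b\<in>UNIV. etaI a b * (if c = b then 1 else 0))"
    by (simp add: if_distrib cong: if_cong)
  also have "\<dots> = (\<Sum>b\<in>UNIV. etaI a b * (\<Sum>d\<in>UNIV. etaI c d * eta d b))"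
    by (simp add: inv2)
  also have "\<dots> = (\<Sum>d\<in>UNIV. etaI c d * (\<Sum>b\<in>UNIV. etaI a b * eta b d))"
    unfolding sum_distrib_left
    by (subst sum.swap) (simp add: sym mult.commute mult.left_commute)
  also have "\<dots> = etaI c a" by (simp add: inv2 if_distrib cong: if_cong)
  finally show ?thesis .
qed

lemma pd_mulQ: "pd a (mulQ eta p) = (\<lambda>m. mulQ eta (pd a p) m + 2 * (\<Sum>c\<in>UNIV. eta a c * mulx c p m))"
proof
  fix m
  have "pd a (mulQ eta p) m = (\<Sum>b\<in>UNIV. \<Sum>c\<in>UNIV. eta b c * pd a (mulx b (mulx c p)) m)"
    unfolding mulQ_def by (simp add: lin_sum[OF lin_pd] lin_scale[OF lin_pd])
  also have "\<dots> = mulQ eta (pd a p) m + (\<Sum>b\<in>UNIV. eta b a * mulx b p m) + (\<Sum>c\<in>UNIV. eta a c * mulx c p m)"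
  proof -
    have e: "eta b c * pd a (mulx b (mulx c p)) m = eta b c * mulx b (mulx c (pd a p)) m
      + (if c = a then eta b a * mulx b p m else 0) + (if b = a then eta a c * mulx c p m else 0)" for b c
      by (auto simp: pd_mulx2 distrib_left)
    show ?thesis unfolding e mulQ_def by (simp add: sum.distrib sum_if_outer)
  qed
  finally show "pd a (mulQ eta p) m = mulQ eta (pd a p) m + 2 * (\<Sum>c\<in>UNIV. eta a c * mulx c p m)"
    by (simp add: sym[of _ a])
qed


lemma contr2: "(\<Sum>c\<in>UNIV. etaI b c * eta c e) = (if b = e then 1 else 0)"
  by (rule inv2)

lemma C1: "(\<Sum>b\<in>UNIV. \<Sum>c\<in>UNIV. etaI b c * (\<Sum>e\<in>UNIV. eta b e * f c e)) = (\<Sum>c\<in>UNIV. f c c)"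
proof -
  have "(\<Sum>b\<in>UNIV. \<Sum>c\<in>UNIV. etaI b c * (\<Sum>e\<in>UNIV. eta b e * f c e))
     = (\<Sum>c\<in>UNIV. \<Sum>b\<in>UNIV. \<Sum>e\<in>UNIV. etaI b c * eta b e * f c e)"
    unfolding sum_distrib_left by (subst sum.swap) (simp add: mult.assoc)
  also have "\<dots> = (\<Sum>c\<in>UNIV. \<Sum>e\<in>UNIV. (\<Sum>b\<in>UNIV. etaI b c * eta b e) * f c e)"
    unfolding sum_distrib_right by (subst (2) sum.swap) simp
  also have "\<dots> = (\<Sum>c\<in>UNIV. f c c)" unfolding contr1 by (simp add: delta_sum)
  finally show ?thesis .
qed

lemma C2: "(\<Sum>b\<in>UNIV. \<Sum>c\<in>UNIV. etaI b c * (\<Sum>e\<in>UNIV. eta c e * f b e)) = (\<Sum>b\<in>UNIV. f b b)"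
proof -
  have "(\<Sum>b\<in>UNIV. \<Sum>c\<in>UNIV. etaI b c * (\<Sum>e\<in>UNIV. eta c e * f b e))
     = (\<Sum>b\<in>UNIV. \<Sum>e\<in>UNIV. (\<Sum>c\<in>UNIV. etaI b c * eta c e) * f b e)"
    unfolding sum_distrib_left sum_distrib_right by (subst (2) sum.swap) (simp add: mult.assoc)
  also have "\<dots> = (\<Sum>b\<in>UNIV. f b b)" unfolding contr2 by (simp add: delta_sum)
  finally show ?thesis .
qed

lemma C3: "(\<Sum>b\<in>UNIV. \<Sum>c\<in>UNIV. etaI b c * eta c b) = of_nat CARD('n)"
  by (simp add: inv2)

lemma pp_mulx: "pd b (pd c (mulx a p)) m = mulx a (pd b (pd c p)) m
   + (if b = a then pd c p m else 0) + (if c = a then pd b p m else 0)"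
  by (cases "c = a") (simp_all add: pd_mulx lin_add[OF lin_pd])

lemma lap_mulx: "lap etaI (mulx a p) = (\<lambda>m. mulx a (lap etaI p) m + 2 * pdup etaI a p m)"
proof
  fix m
  have e: "etaI b c * pd b (pd c (mulx a p)) m = etaI b c * mulx a (pd b (pd c p)) m
     + (if b = a then etaI a c * pd c p m else 0) + (if c = a then etaI a b * pd b p m else 0)" for b c
    by (auto simp: pp_mulx distrib_left etaI_sym)
  have "lap etaI (mulx a p) m = mulx a (lap etaI p) m + pdup etaI a p m + pdup etaI a p m"
    unfolding lap_def e
    by (simp add: sum.distrib sum_if_outer lin_sum[OF lin_mulx] lin_scale[OF lin_mulx] pdup_def)
  then show "lap etaI (mulx a p) m = mulx a (lap etaI p) m + 2 * pdup etaI a p m" by simp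
qed

lemma pp_Q: "pd b (pd c (mulQ eta p)) m = mulQ eta (pd b (pd c p)) m
   + 2 * (\<Sum>e\<in>UNIV. eta b e * mulx e (pd c p) m)
   + 2 * (\<Sum>e\<in>UNIV. eta c e * mulx e (pd b p) m) + 2 * eta c b * p m"
proof -
  have "pd b (pd c (mulQ eta p)) m = pd b (mulQ eta (pd c p)) m
     + 2 * (\<Sum>e\<in>UNIV. eta c e * pd b (mulx e p) m)"
    unfolding pd_mulQ[of c]
    by (simp add: lin_add[OF lin_pd] lin_scale[OF lin_pd] lin_sum[OF lin_pd])
  also have "(\<Sum>e\<in>UNIV. eta c e * pd b (mulx e p) m)
      = (\<Sum>e\<in>UNIV. eta c e * mulx e (pd b p) m) + eta c b * p m"
  proof -
    have "eta c e * pd b (mulx e p) m = eta c e * mulx e (pd b p) m + (if e = b then eta c b * p m else 0)" for e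
      by (auto simp: pd_mulx distrib_left)
    then show ?thesis by (simp add: sum.distrib)
  qed
  finally show ?thesis unfolding pd_mulQ[of b] by (simp add: algebra_simps)
qed

lemma lap_mulQ: assumes "homz e p"
  shows "lap etaI (mulQ eta p) = (\<lambda>m. mulQ eta (lap etaI p) m + (2 * of_nat CARD('n) + 4 * of_int e) * p m)"
proof
  fix m
  have "lap etaI (mulQ eta p) m = mulQ eta (lap etaI p) m
     + 2 * (\<Sum>c\<in>UNIV. mulx c (pd c p) m) + 2 * (\<Sum>b\<in>UNIV. mulx b (pd b p) m)
     + 2 * of_nat CARD('n) * p m"
  proof -
    have "lap etaI (mulQ eta p) m =
       (\<Sum>b\<in>UNIV. \<Sum>c\<in>UNIV. etaI b c * mulQ eta (pd b (pd c p)) m)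
     + 2 * (\<Sum>b\<in>UNIV. \<Sum>c\<in>UNIV. etaI b c * (\<Sum>e\<in>UNIV. eta b e * mulx e (pd c p) m))
     + 2 * (\<Sum>b\<in>UNIV. \<Sum>c\<in>UNIV. etaI b c * (\<Sum>e\<in>UNIV. eta c e * mulx e (pd b p) m))
     + 2 * (\<Sum>b\<in>UNIV. \<Sum>c\<in>UNIV. etaI b c * eta c b) * p m"
      unfolding lap_def pp_Q
      by (simp add: distrib_left sum.distrib sum_distrib_left sum_distrib_right algebra_simps)
    also have "(\<Sum>b\<in>UNIV. \<Sum>c\<in>UNIV. etaI b c * mulQ eta (pd b (pd c p)) m) = mulQ eta (lap etaI p) m"
      unfolding lap_def by (simp add: lin_sum[OF lin_mulQ] lin_scale[OF lin_mulQ])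
    finally show ?thesis unfolding C1 C2 C3 .
  qed
  then show "lap etaI (mulQ eta p) m = mulQ eta (lap etaI p) m + (2 * of_nat CARD('n) + 4 * of_int e) * p m"
    unfolding euler_homz[OF assms] by (simp add: algebra_simps)
qed

lemma lap_pdup: "lap etaI (pdup etaI a p) = pdup etaI a (lap etaI p)"
proof
  fix m
  have "lap etaI (pdup etaI a p) m = (\<Sum>b\<in>UNIV. \<Sum>c\<in>UNIV. \<Sum>e\<in>UNIV. etaI b c * (etaI a e * pd e (pd b (pd c p)) m))"
    unfolding lap_def pdup_def
    by (simp add: lin_sum[OF lin_pd] lin_scale[OF lin_pd] sum_distrib_left pd_comm[of _ e for e])
  also have "\<dots> = (\<Sum>e\<in>UNIV. \<Sum>b\<in>UNIV. \<Sum>c\<in>UNIV. etaI a e * (etaI b c * pd e (pd b (pd c p)) m))"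
    apply (subst sum.swap) apply (subst (2) sum.swap) by (simp add: algebra_simps)
  also have "\<dots> = pdup etaI a (lap etaI p) m"
    unfolding lap_def pdup_def
    by (simp add: lin_sum[OF lin_pd] lin_scale[OF lin_pd] sum_distrib_left)
  finally show "lap etaI (pdup etaI a p) m = pdup etaI a (lap etaI p) m" .
qed


lemma homz_Qpow: "homz e p \<Longrightarrow> homz (e + 2 * int k) ((mulQ eta ^^ k) p)"
proof (induction k)
  case (Suc k)
  then show ?case using homz_mulQ[OF Suc.IH[OF Suc.prems], of eta] by (simp add: algebra_simps)
qed simp

lemma lap_Qpow: assumes "homz e p"
  shows "lap etaI ((mulQ eta ^^ Suc j) p) = (\<lambda>m. (mulQ eta ^^ Suc j) (lap etaI p) m
     + of_int (int (Suc j) * (2 * int CARD('n) + 4 * e + 4 * int j)) * (mulQ eta ^^ j) p m)"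
proof (induction j)
  case 0
  then show ?case using lap_mulQ[OF assms] by (simp add: algebra_simps)
next
  case (Suc j)
  have hz: "homz (e + 2 * int (Suc j)) ((mulQ eta ^^ Suc j) p)" by (rule homz_Qpow[OF assms])
  show ?case
  proof
    fix m
    have "lap etaI ((mulQ eta ^^ Suc (Suc j)) p) m = mulQ eta (lap etaI ((mulQ eta ^^ Suc j) p)) m
       + (2 * of_nat CARD('n) + 4 * of_int (e + 2 * int (Suc j))) * (mulQ eta ^^ Suc j) p m"
      using lap_mulQ[OF hz] by simp
    also have "mulQ eta (lap etaI ((mulQ eta ^^ Suc j) p)) m = (mulQ eta ^^ Suc (Suc j)) (lap etaI p) m
       + of_int (int (Suc j) * (2 * int CARD('n) + 4 * e + 4 * int j)) * (mulQ eta ^^ Suc j) p m"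
      unfolding Suc.IH by (simp add: lin_add[OF lin_mulQ] lin_scale[OF lin_mulQ])
    finally show "lap etaI ((mulQ eta ^^ Suc (Suc j)) p) m = (mulQ eta ^^ Suc (Suc j)) (lap etaI p) m
     + of_int (int (Suc (Suc j)) * (2 * int CARD('n) + 4 * e + 4 * int (Suc j))) * (mulQ eta ^^ (Suc j)) p m"
      by (simp add: algebra_simps)
  qed
qed

lemma reduce_step:
  assumes H0: "lap etaI H = (\<lambda>_. 0)" and HT: "H = (mulQ eta ^^ Suc j) T" and hT: "homz e T"
  shows "\<exists>T'. homz (e - 2) T' \<and> H = (mulQ eta ^^ Suc (Suc j)) T'"
proof (cases "e < 0")
  case True
  then have "T = (\<lambda>_. 0)" using homz_neg[OF hT] by simp
  then have "H = (mulQ eta ^^ Suc (Suc j)) (\<lambda>_. 0)"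
    using HT by (simp only: lin_zero[OF lin_funpow[OF lin_mulQ]])
  then show ?thesis using homz_zero by blast
next
  case False
  define c where "c = complex_of_int (int (Suc j) * (2 * int CARD('n) + 4 * e + 4 * int j))"
  have "int (Suc j) * (2 * int CARD('n) + 4 * e + 4 * int j) > 0"
  proof -
    have "int CARD('n) > 0" by simp
    then have p: "0 < 2 * int CARD('n) + 4 * e + 4 * int j" using False by linarith
    show ?thesis by (rule mult_pos_pos) (use p in simp_all)
  qed
  then have c0: "c \<noteq> 0" unfolding c_def by (simp only: of_int_eq_0_iff)
  define T' where "T' = (\<lambda>m. (- 1 / c) * lap etaI T m)"
  have hT': "homz (e - 2) T'" unfolding T'_def by (intro homz_scale homz_lap hT)
  have "(mulQ eta ^^ j) T = (\<lambda>m. (- 1 / c) * (mulQ eta ^^ Suc j) (lap etaI T) m)"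
  proof
    fix m
    have "lap etaI H m = 0" using H0 by simp
    then have "(mulQ eta ^^ Suc j) (lap etaI T) m + c * (mulQ eta ^^ j) T m = 0"
      unfolding HT lap_Qpow[OF hT] c_def by simp
    then show "(mulQ eta ^^ j) T m = (- 1 / c) * (mulQ eta ^^ Suc j) (lap etaI T) m"
      using c0 by (simp add: field_simps) (metis add.commute add_eq_0_iff2 mult.commute)
  qed
  also have "\<dots> = (mulQ eta ^^ Suc j) T'"
    unfolding T'_def by (rule lin_scale[OF lin_funpow[OF lin_mulQ], symmetric])
  finally have "H = mulQ eta ((mulQ eta ^^ Suc j) T')" using HT by simp
  then show ?thesis using hT' by auto
qed

lemma reduce_all:
  assumes H0: "lap etaI H = (\<lambda>_. 0)" and HT: "H = mulQ eta T" and hT: "homz e T"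
  shows "\<exists>T. homz (e - 2 * int k) T \<and> H = (mulQ eta ^^ Suc k) T"
proof (induction k)
  case 0 then show ?case using HT hT by auto
next
  case (Suc k)
  then obtain T1 where "homz (e - 2 * int k) T1" "H = (mulQ eta ^^ Suc k) T1" by blast
  from reduce_step[OF H0 this(2) this(1)] show ?case by (simp add: algebra_simps)
qed

lemma harm_Q_zero:
  assumes H0: "lap etaI H = (\<lambda>_. 0)" and HT: "H = mulQ eta T" and hT: "homz e T"
  shows "H = (\<lambda>_. 0)"
proof -
  obtain T1 where h: "homz (e - 2 * int (nat e + 1)) T1" "H = (mulQ eta ^^ Suc (nat e + 1)) T1"
    using reduce_all[OF assms] by blast
  have "int (nat e) \<ge> e" "int (nat e + 1) = int (nat e) + 1" "int (nat e) \<ge> 0" by simp_all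
  then have "e - 2 * int (nat e + 1) < 0" by (simp add: algebra_simps)
  then have "T1 = (\<lambda>_. 0)" by (rule homz_neg[OF h(1)])
  then show ?thesis using h(2) lin_zero[OF lin_funpow[OF lin_mulQ]] by metis
qed

lemma pd_pone: "pd a pone = (\<lambda>_. 0)"
  unfolding pd_def pone_def by (auto simp: fun_eq_iff)

lemma lap_pone: "lap etaI pone = (\<lambda>_. 0)"
  unfolding lap_def pd_pone lin_zero[OF lin_pd] by simp

lemma xt_main: assumes n3: "CARD('n) \<ge> 3"
  shows "homz (int (length as)) (foldr (xtilde eta etaI) as pone)
    \<and> lap etaI (foldr (xtilde eta etaI) as pone) = (\<lambda>_. 0)
    \<and> (\<exists>S. homz (int (length as) - 2) S
         \<and> foldr (xtilde eta etaI) as pone = (\<lambda>m. foldr mulx as pone m + mulQ eta S m))"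
proof (induction as)
  case Nil
  have "pone = (\<lambda>m. foldr mulx [] pone m + mulQ eta (\<lambda>_. 0) m)"
    by (simp add: lin_zero[OF lin_mulQ])
  then show ?case using homz_pone lap_pone homz_zero[of "-2"] by auto
next
  case (Cons a as)
  define \<psi> where "\<psi> = foldr (xtilde eta etaI) as pone"
  define d where "d = int (length as)"
  define \<kappa> :: complex where "\<kappa> = 1 / (2 - 2 * of_int d - of_nat CARD('n))"
  from Cons.IH obtain S where hpsi: "homz d \<psi>" and lpsi: "lap etaI \<psi> = (\<lambda>_. 0)"
    and hS: "homz (d - 2) S" and psiS: "\<psi> = (\<lambda>m. foldr mulx as pone m + mulQ eta S m)"
    unfolding \<psi>_def d_def by blast
  have hX: "homz (d + 1) (mulQ eta (pdup etaI a \<psi>))"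
    using homz_mulQ[OF homz_pdup[OF hpsi]] by (simp add: algebra_simps)
  have den: "(2 - 2 * of_int d - of_nat CARD('n) :: complex) = of_int (2 - 2 * d - int CARD('n))" by simp
  have den0: "(2 - 2 * of_int d - of_nat CARD('n) :: complex) \<noteq> 0"
    unfolding den of_int_eq_0_iff using n3 d_def by linarith
  have xt: "xtilde eta etaI a \<psi> = (\<lambda>m. mulx a \<psi> m + \<kappa> * mulQ eta (pdup etaI a \<psi>) m)"
  proof
    fix m
    show "xtilde eta etaI a \<psi> m = mulx a \<psi> m + \<kappa> * mulQ eta (pdup etaI a \<psi>) m"
    proof (cases "mulQ eta (pdup etaI a \<psi>) m = 0")
      case True then show ?thesis unfolding xtilde_def inv2H4_def by simp
    next
      case False
      then have "int (mdeg m) = d + 1" using hX unfolding homz_def by blast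
      then have "(of_nat (mdeg m) :: complex) = of_int (d + 1)" by (metis of_int_of_nat_eq)
      then have "(4 - 2 * of_nat (mdeg m) - of_nat CARD('n) :: complex) = 2 - 2 * of_int d - of_nat CARD('n)"
        by simp
      then show ?thesis unfolding xtilde_def inv2H4_def \<kappa>_def by simp
    qed
  qed
  have hxt: "homz (d + 1) (xtilde eta etaI a \<psi>)"
    unfolding xt by (intro homz_add homz_mulx hpsi homz_scale hX)
  have lapxt: "lap etaI (xtilde eta etaI a \<psi>) = (\<lambda>_. 0)"
  proof -
    have hp: "homz (d - 1) (pdup etaI a \<psi>)" by (rule homz_pdup[OF hpsi])
    have "lap etaI (xtilde eta etaI a \<psi>) = (\<lambda>m. lap etaI (mulx a \<psi>) m + \<kappa> * lap etaI (mulQ eta (pdup etaI a \<psi>)) m)"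
      unfolding xt by (simp add: lin_add[OF lin_lap] lin_scale[OF lin_lap])
    also have "\<dots> = (\<lambda>m. (2 + \<kappa> * (2 * of_nat CARD('n) + 4 * of_int (d - 1))) * pdup etaI a \<psi> m)"
      unfolding lap_mulx lap_mulQ[OF hp] lpsi lap_pdup lin_zero[OF lin_mulx] lin_zero[OF lin_pdup] lin_zero[OF lin_mulQ]
      by (simp add: algebra_simps)
    also have "2 + \<kappa> * (2 * of_nat CARD('n) + 4 * of_int (d - 1)) = 0"
      unfolding \<kappa>_def using den0 by (simp add: field_simps)
    finally show ?thesis by simp
  qed
  define S' where "S' = (\<lambda>m. mulx a S m + \<kappa> * pdup etaI a \<psi> m)"
  have hS': "homz (d + 1 - 2) S'"
  proof -
    have "homz (d - 2 + 1) (mulx a S)" by (rule homz_mulx[OF hS])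
    moreover have "homz (d - 1) (pdup etaI a \<psi>)" by (rule homz_pdup[OF hpsi])
    ultimately show ?thesis unfolding S'_def
      by (intro homz_add homz_scale) (simp_all add: algebra_simps)
  qed
  have eqS: "xtilde eta etaI a \<psi> = (\<lambda>m. foldr mulx (a # as) pone m + mulQ eta S' m)"
    unfolding xt S'_def
    by (subst (1) psiS) (simp add: lin_add[OF lin_mulx] lin_add[OF lin_mulQ] lin_scale[OF lin_mulQ] mulx_mulQ algebra_simps)
  show ?case using hxt lapxt hS' eqS unfolding \<psi>_def d_def by (auto simp: add.commute)
qed

end

theorem mainTheorem9:
  fixes eta etaI :: "'n::finite \<Rightarrow> 'n \<Rightarrow> complex"
    and l :: nat and c :: "'n list \<Rightarrow> complex"
  assumes n3: "CARD('n) \<ge> 3"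
    and sym: "\<And>a b. eta a b = eta b a"
    and inv1: "\<And>a c. (\<Sum>b\<in>UNIV. eta a b * etaI b c) = (if a = c then 1 else 0)"
    and inv2: "\<And>a c. (\<Sum>b\<in>UNIV. etaI a b * eta b c) = (if a = c then 1 else 0)"
    and harm: "lap etaI (polyOf l c) = (\<lambda>_. 0)"
  shows "tildeOf eta etaI l c = polyOf l c"
proof -
  interpret metric eta etaI by unfold_locales (fact sym inv1 inv2)+
  define A where "A = {as :: 'n list. length as = l}"
  have finA: "finite A" unfolding A_def using finite_lists_length_eq[of "UNIV :: 'n set" l] by simp
  define h where "h = (\<lambda>as. foldr (xtilde eta etaI) as pone)"
  have "\<forall>as. \<exists>S. homz (int (length as) - 2) S \<and> h as = (\<lambda>m. foldr mulx as pone m + mulQ eta S m)"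
    using xt_main[OF n3] unfolding h_def by blast
  then obtain S where hS: "\<And>as. homz (int (length as) - 2) (S as)"
    and eS: "\<And>as. h as = (\<lambda>m. foldr mulx as pone m + mulQ eta (S as) m)"
    by metis
  have lh: "lap etaI (h as) = (\<lambda>_. 0)" for as using xt_main[OF n3] unfolding h_def by blast
  define T where "T = (\<lambda>m. \<Sum>as\<in>A. c as * S as m)"
  have hT: "homz (int l - 2) T" unfolding T_def
    by (intro homz_sum homz_scale) (use hS A_def in auto)
  define H where "H = (\<lambda>m. tildeOf eta etaI l c m - polyOf l c m)"
  have tdef: "tildeOf eta etaI l c = (\<lambda>m. \<Sum>as\<in>A. c as * h as m)"
    unfolding tildeOf_def A_def h_def by simp
  have pdef: "polyOf l c = (\<lambda>m. \<Sum>as\<in>A. c as * foldr mulx as pone m)"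
    unfolding polyOf_def A_def by simp
  have HT: "H = mulQ eta T"
  proof
    fix m
    have "H m = (\<Sum>as\<in>A. c as * mulQ eta (S as) m)"
      unfolding H_def tdef pdef eS by (simp add: sum_subtractf[symmetric] algebra_simps)
    also have "\<dots> = mulQ eta T m"
      unfolding T_def by (simp add: lin_sum[OF lin_mulQ finA] lin_scale[OF lin_mulQ])
    finally show "H m = mulQ eta T m" .
  qed
  have "lap etaI (tildeOf eta etaI l c) = (\<lambda>_. 0)"
    unfolding tdef by (simp add: lin_sum[OF lin_lap finA] lin_scale[OF lin_lap] lh)
  then have H0: "lap etaI H = (\<lambda>_. 0)"
    unfolding H_def lin_diff[OF lin_lap] harm by simp
  have "H = (\<lambda>_. 0)" by (rule harm_Q_zero[OF H0 HT hT])
  then show ?thesis unfolding H_def by (simp add: fun_eq_iff)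
qed

end
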